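(* Let $m\in\mathbb{N}$ and let $G$ be a bipartite graph with parts $X$ and $Y$, where $Y\neq\emptyset$, such that $|X|\geq |Y|+2m$ and every vertex in $Y$ has degree at least $|X|-m$. Then $G$ contains a collection of at most $\lfloor |X|/|Y|\rfloor$ paths whose union covers all vertices of $Y$ and all but $|Y|+2m$ vertices of $X$.
   Context: Paths may have length zero and need not be vertex-disjoint. *)

theory Defs
  imports Main
begin

definition bipartite_graph :: "'a set \<Rightarrow> 'a set \<Rightarrow> ('a \<Rightarrow> 'a \<Rightarrow> bool) \<Rightarrow> bool" where
  "bipartite_graph X Y E \<longleftrightarrow> finite X \<and> finite Y \<and> X \<inter> Y = {} \<and>
     (\<forall>u v. E u v \<longrightarrow> E v u) \<and>
     (\<forall>u v. E u v \<longrightarrow> (u \<in> X \<and> v \<in> Y) \<or> (u \<in> Y \<and> v \<in> X))"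

definition degree :: "'a set \<Rightarrow> ('a \<Rightarrow> 'a \<Rightarrow> bool) \<Rightarrow> 'a \<Rightarrow> nat" where
  "degree V E v = card {u \<in> V. E v u}"

definition is_path :: "'a set \<Rightarrow> ('a \<Rightarrow> 'a \<Rightarrow> bool) \<Rightarrow> 'a list \<Rightarrow> bool" where
  "is_path V E p \<longleftrightarrow> p \<noteq> [] \<and> distinct p \<and> set p \<subseteq> V \<and>
     (\<forall>i. Suc i < length p \<longrightarrow> E (p ! i) (p ! Suc i))"

end

theory Submission
  imports Defs
begin

lemma is_path_Cons:
  assumes "is_path V E q" "v \<in> V" "v \<notin> set q" "E v (hd q)"
  shows "is_path V E (v # q)"
  using assms unfolding is_path_def
  by (auto simp: nth_Cons hd_conv_nth split: nat.split)

lemma nbr_card: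
  assumes bg: "bipartite_graph X Y E"
    and deg: "\<forall>y\<in>Y. degree (X \<union> Y) E y \<ge> card X - m"
    and y: "y \<in> Y"
  shows "card {u\<in>X. E y u} \<ge> card X - m"
proof -
  have "{u \<in> X \<union> Y. E y u} = {u\<in>X. E y u}"
    using bg y unfolding bipartite_graph_def by blast
  then show ?thesis using deg y unfolding degree_def by auto
qed

lemma common_card:
  assumes bg: "bipartite_graph X Y E"
    and deg: "\<forall>y\<in>Y. degree (X \<union> Y) E y \<ge> card X - m"
    and y: "y \<in> Y" and w: "w \<in> Y"
  shows "card {u\<in>X. E w u \<and> E y u} \<ge> card X - 2 * m"
proof -
  have fX: "finite X" using bg unfolding bipartite_graph_def by auto
  let ?A = "{u\<in>X. E w u}" and ?B = "{u\<in>X. E y u}"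
  have a: "card ?A \<ge> card X - m" using nbr_card[OF bg deg w] .
  have b: "card ?B \<ge> card X - m" using nbr_card[OF bg deg y] .
  have "card ?A + card ?B = card (?A \<union> ?B) + card (?A \<inter> ?B)"
    by (rule card_Un_Int) (use fX in auto)
  moreover have "card (?A \<union> ?B) \<le> card X"
    by (rule card_mono[OF fX]) auto
  moreover have "card (?A \<inter> ?B) = card {u\<in>X. E w u \<and> E y u}"
    by (rule arg_cong[where f=card]) auto
  ultimately show ?thesis using a b by linarith
qed

lemma step:
  assumes bg: "bipartite_graph X Y E"
    and deg: "\<forall>y\<in>Y. degree (X \<union> Y) E y \<ge> card X - m"
    and y: "y \<in> Y" and w: "w \<in> Y"
    and Q: "Q \<subseteq> X" and Qc: "card Q + 2 * m < card X" and F: "F \<subseteq> X"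
  shows "\<exists>x\<in>X. x \<notin> Q \<and> E w x \<and> E y x \<and> (x \<notin> F \<union> Q \<or> card (F \<union> Q) \<ge> card X - 2 * m)"
proof -
  have fX: "finite X" using bg unfolding bipartite_graph_def by auto
  let ?C = "{u\<in>X. E w u \<and> E y u}"
  have C: "card ?C \<ge> card X - 2 * m" using common_card[OF bg deg y w] .
  show ?thesis
  proof (cases "?C \<subseteq> F \<union> Q")
    case True
    have "card ?C \<le> card (F \<union> Q)"
      by (rule card_mono) (use fX F Q True finite_subset in auto)
    hence h: "card (F \<union> Q) \<ge> card X - 2 * m" using C by linarith
    have "\<not> ?C \<subseteq> Q"
    proof
      assume "?C \<subseteq> Q"
      hence "card ?C \<le> card Q" by (rule card_mono[rotated]) (use fX Q finite_subset in auto)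
      thus False using C Qc by linarith
    qed
    then obtain x where "x \<in> ?C" "x \<notin> Q" by blast
    thus ?thesis using h by blast
  next
    case False
    then obtain x where "x \<in> ?C" "x \<notin> F \<union> Q" by blast
    thus ?thesis by blast
  qed
qed


lemma extend:
  assumes bg: "bipartite_graph X Y E"
    and deg: "\<forall>y\<in>Y. degree (X \<union> Y) E y \<ge> card X - m"
    and q: "is_path (X \<union> Y) E q" and hq: "hd q = y" and y: "y \<in> Y" and w: "w \<in> Y"
    and Qc: "card (set q \<inter> X) + 2 * m < card X" and F: "F \<subseteq> X"
  shows "\<exists>x. is_path (X \<union> Y) E (x # q) \<and> x \<in> X \<and> E w x \<and>
     set (x # q) \<inter> X = insert x (set q \<inter> X) \<and> x \<notin> set q \<and>
     (min (card (F \<union> (set q \<inter> X)) + 1) (card X - 2 * m) \<le> card (F \<union> (set (x # q) \<inter> X)))"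
proof -
  have fX: "finite X" using bg unfolding bipartite_graph_def by auto
  obtain x where x: "x \<in> X" "x \<notin> set q \<inter> X" "E w x" "E y x"
    and alt: "x \<notin> F \<union> (set q \<inter> X) \<or> card (F \<union> (set q \<inter> X)) \<ge> card X - 2 * m"
    using step[OF bg deg y w _ Qc F] by blast
  have sym: "E x y" using bg x(4) unfolding bipartite_graph_def by blast
  have xq: "x \<notin> set q" using x by blast
  have p: "is_path (X \<union> Y) E (x # q)"
    by (rule is_path_Cons[OF q]) (use x xq sym hq in auto)
  have eq: "F \<union> (set (x # q) \<inter> X) = insert x (F \<union> (set q \<inter> X))" using x by auto
  have fin: "finite (F \<union> (set q \<inter> X))" using fX F finite_subset by auto
  have "min (card (F \<union> (set q \<inter> X)) + 1) (card X - 2 * m) \<le> card (F \<union> (set (x # q) \<inter> X))"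
  proof (cases "x \<in> F \<union> (set q \<inter> X)")
    case True
    then show ?thesis using alt eq by (simp add: insert_absorb)
  next
    case False
    then show ?thesis unfolding eq using fin by simp
  qed
  then show ?thesis using p x xq by auto
qed

lemma build:
  assumes bg: "bipartite_graph X Y E"
    and deg: "\<forall>y\<in>Y. degree (X \<union> Y) E y \<ge> card X - m"
  shows "distinct (y#ys) \<Longrightarrow> set (y#ys) \<subseteq> Y \<Longrightarrow> w \<in> Y \<Longrightarrow> length (y#ys) + 2*m \<le> card X
    \<Longrightarrow> F \<subseteq> X \<Longrightarrow>
  \<exists>p. is_path (X \<union> Y) E p \<and> hd p \<in> X \<and> E w (hd p) \<and> set p \<subseteq> X \<union> set (y#ys)
    \<and> set (y#ys) \<subseteq> set p \<and> card (set p \<inter> X) \<le> length (y#ys)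
    \<and> min (card F + length (y#ys)) (card X - 2*m) \<le> card (F \<union> (set p \<inter> X))"
proof (induction ys arbitrary: y F w)
  case Nil
  have disj: "X \<inter> Y = {}" using bg unfolding bipartite_graph_def by auto
  have y: "y \<in> Y" using Nil by auto
  have q: "is_path (X \<union> Y) E [y]" using y unfolding is_path_def by auto
  have sq: "set [y] \<inter> X = {}" using y disj by auto
  obtain x where x: "is_path (X \<union> Y) E [x, y]" "x \<in> X" "E w x"
     "set [x,y] \<inter> X = insert x (set [y] \<inter> X)"
     "min (card (F \<union> (set [y] \<inter> X)) + 1) (card X - 2 * m) \<le> card (F \<union> (set [x,y] \<inter> X))"
    using extend[OF bg deg q _ y Nil(3) _ Nil(5)] sq Nil(4) by auto
  show ?case
    by (rule exI[of _ "[x,y]"]) (use x sq in auto)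
next
  case (Cons y' ys)
  have disj: "X \<inter> Y = {}" using bg unfolding bipartite_graph_def by auto
  have y: "y \<in> Y" using Cons by auto
  obtain p' where p': "is_path (X \<union> Y) E p'" "hd p' \<in> X" "E y (hd p')"
    "set p' \<subseteq> X \<union> set (y'#ys)" "set (y'#ys) \<subseteq> set p'" "card (set p' \<inter> X) \<le> length (y'#ys)"
    "min (card F + length (y'#ys)) (card X - 2*m) \<le> card (F \<union> (set p' \<inter> X))"
    using Cons.IH[of y' y F] Cons.prems by auto
  have yp: "y \<notin> set p'" using p'(4) Cons.prems(1) y disj by auto
  have q: "is_path (X \<union> Y) E (y # p')" by (rule is_path_Cons) (use p' y yp in auto)
  have sq: "set (y # p') \<inter> X = set p' \<inter> X" using y disj by auto
  obtain x where x: "is_path (X \<union> Y) E (x # y # p')" "x \<in> X" "E w x"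
     "set (x # y # p') \<inter> X = insert x (set (y # p') \<inter> X)"
     "min (card (F \<union> (set (y # p') \<inter> X)) + 1) (card X - 2 * m) \<le> card (F \<union> (set (x # y # p') \<inter> X))"
     "x \<notin> set (y # p')"
    using extend[OF bg deg q _ y Cons.prems(3) _ Cons.prems(5)] sq Cons.prems(4) p'(6) by auto
  have fX: "finite (set p' \<inter> X)" by auto
  have c1: "card (set (x # y # p') \<inter> X) = card (set p' \<inter> X) + 1"
    using x(4,6) sq by (simp add: fX)
  show ?case
    apply (rule exI[of _ "x # y # p'"])
    using x p'(4,5,6,7) c1 sq by auto
qed


theorem lemma2p3:
  fixes X Y :: "'a set" and E :: "'a \<Rightarrow> 'a \<Rightarrow> bool" and m :: nat
  assumes "bipartite_graph X Y E"
    and "Y \<noteq> {}"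
    and "card X \<ge> card Y + 2 * m"
    and "\<forall>y\<in>Y. degree (X \<union> Y) E y \<ge> card X - m"
  shows "\<exists>P :: 'a list list. length P \<le> card X div card Y \<and>
           (\<forall>p \<in> set P. is_path (X \<union> Y) E p) \<and>
           Y \<subseteq> (\<Union>p \<in> set P. set p) \<and>
           card (X - (\<Union>p \<in> set P. set p)) \<le> card Y + 2 * m"
proof -
  note bg = assms(1) and deg = assms(4)
  have fX: "finite X" and fY: "finite Y" using bg unfolding bipartite_graph_def by auto
  obtain ys where ys: "set ys = Y" "distinct ys" using finite_distinct_list[OF fY] by blast
  then obtain y0 ys0 where ys0: "ys = y0 # ys0" using assms(2) by (cases ys) auto
  have lk: "length ys = card Y" using ys distinct_card by metis
  have kpos: "card Y > 0" using fY assms(2) by auto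
  have y0: "y0 \<in> Y" using ys ys0 by auto
  have claim: "\<exists>P :: 'a list list. length P = j \<and> (\<forall>p \<in> set P. is_path (X \<union> Y) E p) \<and>
      (j > 0 \<longrightarrow> Y \<subseteq> (\<Union>p \<in> set P. set p)) \<and>
      min (j * card Y) (card X - 2 * m) \<le> card ((\<Union>p \<in> set P. set p) \<inter> X)" for j
  proof (induction j)
    case 0
    show ?case by (rule exI[of _ "[]"]) auto
  next
    case (Suc j)
    then obtain P :: "'a list list" where P: "length P = j" "\<forall>p \<in> set P. is_path (X \<union> Y) E p"
      "min (j * card Y) (card X - 2 * m) \<le> card ((\<Union>p \<in> set P. set p) \<inter> X)" by blast
    let ?F = "(\<Union>p \<in> set P. set p) \<inter> X"
    obtain p where p: "is_path (X \<union> Y) E p" "set (y0#ys0) \<subseteq> set p"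
      "min (card ?F + length (y0#ys0)) (card X - 2*m) \<le> card (?F \<union> (set p \<inter> X))"
      using build[OF bg deg, of y0 ys0 y0 ?F] ys ys0 lk assms(3) y0 by auto
    have e: "(\<Union>q \<in> set (p # P). set q) \<inter> X = ?F \<union> (set p \<inter> X)" by auto
    show ?case
      apply (rule exI[of _ "p # P"])
      using P p e ys ys0 lk by auto
  qed
  define t where "t = card X div card Y"
  obtain P :: "'a list list" where P: "length P = t" "\<forall>p \<in> set P. is_path (X \<union> Y) E p"
      "t > 0 \<longrightarrow> Y \<subseteq> (\<Union>p \<in> set P. set p)"
      "min (t * card Y) (card X - 2 * m) \<le> card ((\<Union>p \<in> set P. set p) \<inter> X)"
    using claim[of t] by blast
  have tpos: "t > 0" unfolding t_def using kpos assms(3) by (simp add: div_greater_zero_iff)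
  have dm: "card X = t * card Y + card X mod card Y" unfolding t_def by simp
  have ml: "card X mod card Y < card Y" using kpos by simp
  have cd: "card (X - (\<Union>p \<in> set P. set p)) = card X - card (X \<inter> (\<Union>p \<in> set P. set p))"
    by (rule card_Diff_subset_Int) (use fX in auto)
  have ci: "card (X \<inter> (\<Union>p \<in> set P. set p)) = card ((\<Union>p \<in> set P. set p) \<inter> X)"
    by (simp add: Int_commute)
  show ?thesis
    apply (rule exI[of _ P])
    using P tpos cd ci dm ml unfolding t_def[symmetric] by auto
qed

end
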